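(* Let $1<p<\infty$, $n\ge1$, and let $f\in C([0,\infty))$, $g\in C^{0,1}([0,\infty))$ be strictly increasing with $f(0)=g(0)=0$. Let $F(s)=\int_0^s f(t)\,dt$ and $\Gamma(s)=\int_0^{2s}g(t)\,dt+\frac{p-1}{p}c\,s^p$ with $c=\big(\frac{p}{p-1}\big)^p n$, and assume $$\int_1^\infty\frac{ds}{\Gamma^{-1}(F(s))}<\infty.$$ Then for every sufficiently large $\bar v_0>0$ there exist $R\in(0,\infty)$ and an increasing function $\bar v$ on $[0,R)$ which is a strict supersolution of $$\big((v')^{p-1}\big)'+\frac{n-1}{r}(v')^{p-1}\le f(v)-g(v'),\qquad v(0)=\bar v_0,\quad v'(0)=0,$$ ceases to exist at $R$, and satisfies $\bar v(r)\to\infty$ as $r\to R$. *)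

theory Defs
  imports "HOL-Analysis.Analysis"
begin

definition KO_F :: "(real \<Rightarrow> real) \<Rightarrow> real \<Rightarrow> real" where
  "KO_F f s = integral {0..s} f"

definition KO_c :: "real \<Rightarrow> nat \<Rightarrow> real" where
  "KO_c p n = (p / (p - 1)) powr p * real n"

definition KO_Gamma :: "real \<Rightarrow> nat \<Rightarrow> (real \<Rightarrow> real) \<Rightarrow> real \<Rightarrow> real" where
  "KO_Gamma p n g s = integral {0..2 * s} g + (p - 1) / p * KO_c p n * s powr p"

definition KO_Gamma_inv :: "real \<Rightarrow> nat \<Rightarrow> (real \<Rightarrow> real) \<Rightarrow> real \<Rightarrow> real" where
  "KO_Gamma_inv p n g = inv_into {0..} (KO_Gamma p n g)"

definition strict_radial_supersol ::
  "real \<Rightarrow> nat \<Rightarrow> (real \<Rightarrow> real) \<Rightarrow> (real \<Rightarrow> real) \<Rightarrow> real \<Rightarrow> real \<Rightarrow> (real \<Rightarrow> real) \<Rightarrow> bool" where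
  "strict_radial_supersol p n f g v0 R v \<longleftrightarrow>
     (\<exists>v'. (\<forall>r\<in>{0..<R}. (v has_real_derivative v' r) (at r within {0..<R}))
         \<and> continuous_on {0..<R} v'
         \<and> (\<forall>r\<in>{0..<R}. v' r \<ge> 0)
         \<and> v 0 = v0 \<and> v' 0 = 0
         \<and> (\<forall>r\<in>{0<..<R}. \<exists>w'. ((\<lambda>s. v' s powr (p - 1)) has_real_derivative w') (at r)
               \<and> w' + (real n - 1) / r * v' r powr (p - 1) < f (v r) - g (v' r)))"

end

theory Submission
  imports Defs
begin


lemma cont_on_atLeast:
  fixes h :: "real \<Rightarrow> real"
  assumes "\<And>b. b > a \<Longrightarrow> continuous_on {a..b} h"
  shows "continuous_on {a..} h"
  unfolding continuous_on_eq_continuous_within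
proof
  fix x assume x: "x \<in> {a..}"
  have c: "continuous_on {a..x+1} h" using assms x by auto
  have "continuous (at x within {a..x+1}) h"
    using c x unfolding continuous_on_eq_continuous_within by auto
  moreover have "at x within {a..} = at x within {a..x+1}"
    by (rule at_within_nhd[where S="{..<x+1}"]) auto
  ultimately show "continuous (at x within {a..}) h" by simp
qed

locale invf =
  fixes h :: "real \<Rightarrow> real" and a :: real
  assumes cont: "continuous_on {a..} h" and sm: "strict_mono_on {a..} h"
begin

definition k where "k = inv_into {a..} h"

lemma inj: "inj_on h {a..}"
  using sm strict_mono_on_imp_inj_on by blast

lemma k_h: "x \<ge> a \<Longrightarrow> k (h x) = x"
  unfolding k_def using inj by (simp add: inv_into_f_f)

lemma h_k: "y \<in> h ` {a..} \<Longrightarrow> h (k y) = y"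
  unfolding k_def by (simp add: f_inv_into_f)

lemma k_in: "y \<in> h ` {a..} \<Longrightarrow> k y \<ge> a"
  unfolding k_def by (metis atLeast_iff inv_into_into)

lemma h_less: "x \<ge> a \<Longrightarrow> y \<ge> a \<Longrightarrow> h x < h y \<longleftrightarrow> x < y"
  using sm by (smt (verit) atLeast_iff strict_mono_onD)

lemma h_le: "x \<ge> a \<Longrightarrow> y \<ge> a \<Longrightarrow> h x \<le> h y \<longleftrightarrow> x \<le> y"
  using h_less by (smt (verit))

lemma image_Icc: "b \<ge> a \<Longrightarrow> h ` {a..b} = {h a..h b}"
proof
  assume b: "b \<ge> a"
  show "h ` {a..b} \<subseteq> {h a..h b}" using h_le b by auto
  show "{h a..h b} \<subseteq> h ` {a..b}"
  proof
    fix y assume y: "y \<in> {h a..h b}"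
    have "continuous_on {a..b} h" using cont by (rule continuous_on_subset) auto
    then obtain x where "a \<le> x" "x \<le> b" "h x = y" using IVT'[of h a y b] y b by auto
    then show "y \<in> h ` {a..b}" by auto
  qed
qed

lemma k_cont_Icc: "b \<ge> a \<Longrightarrow> continuous_on {h a..h b} k"
proof -
  assume b: "b \<ge> a"
  have "continuous_on (h ` {a..b}) k"
    by (rule continuous_on_inv) (auto intro: continuous_on_subset[OF cont] k_h)
  then show ?thesis using image_Icc b by simp
qed

lemma k_cont: "continuous_on (h ` {a..}) k"
  unfolding continuous_on_eq_continuous_within
proof
  fix y assume y: "y \<in> h ` {a..}"
  then obtain x where x: "x \<ge> a" "y = h x" by auto
  have c: "continuous_on {h a..h (x+1)} k" using k_cont_Icc x by auto
  have yy: "y \<in> {h a..h (x+1)}" using x h_le by auto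
  have "continuous (at y within {h a..h (x+1)}) k"
    using c yy continuous_on_eq_continuous_within by blast
  moreover have "at y within h ` {a..} = at y within {h a..h (x+1)}"
  proof (rule at_within_nhd[where S="{..<h (x+1)}"])
    show "y \<in> {..<h (x + 1)}" using x h_less by auto
    show "h ` {a..} \<inter> {..<h (x + 1)} - {y} = {h a..h (x + 1)} \<inter> {..<h (x + 1)} - {y}"
    proof -
      have "h ` {a..} \<inter> {..<h (x + 1)} = {h a..<h (x+1)}"
      proof
        show "h ` {a..} \<inter> {..<h (x + 1)} \<subseteq> {h a..<h (x + 1)}" using h_le by auto
        show "{h a..<h (x + 1)} \<subseteq> h ` {a..} \<inter> {..<h (x + 1)}"
        proof
          fix z assume z: "z \<in> {h a..<h (x + 1)}"
          then have "z \<in> h ` {a..x+1}" using image_Icc[of "x+1"] x by auto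
          then show "z \<in> h ` {a..} \<inter> {..<h (x + 1)}" using z by auto
        qed
      qed
      then show ?thesis by auto
    qed
  qed auto
  ultimately show "continuous (at y within h ` {a..}) k" by simp
qed

lemma k_deriv:
  assumes x: "x > a" and d: "(h has_real_derivative D) (at x)" and D: "D \<noteq> 0"
  shows "(k has_real_derivative inverse D) (at (h x))"
proof (rule DERIV_inverse_function[where a="h a" and b="h (x+1)"])
  show "(h has_real_derivative D) (at (k (h x)))" using d k_h x by simp
  show "D \<noteq> 0" by fact
  show "h a < h x" "h x < h (x+1)" using h_less x by auto
  show "h (k y) = y" if "h a < y" "y < h (x + 1)" for y
  proof -
    have "y \<in> h ` {a..x+1}" using that image_Icc[of "x+1"] x by auto
    then have "y \<in> h ` {a..}" by auto
    then show ?thesis by (rule h_k)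
  qed
  have c: "continuous_on {h a..h (x+1)} k" using k_cont_Icc x by auto
  show "isCont k (h x)"
    by (rule continuous_on_interior[OF c]) (use h_less x in auto)
qed

end



lemma int_lower:
  fixes u :: "real \<Rightarrow> real"
  assumes "u integrable_on {a..b}" "a \<le> b" "\<And>x. x \<in> {a..b} \<Longrightarrow> m \<le> u x"
  shows "(b - a) * m \<le> integral {a..b} u"
proof -
  have "integral {a..b} (\<lambda>_. m) \<le> integral {a..b} u"
    by (rule integral_le) (use assms in auto)
  then show ?thesis using assms by simp
qed

lemma int_upper:
  fixes u :: "real \<Rightarrow> real"
  assumes "u integrable_on {a..b}" "a \<le> b" "\<And>x. x \<in> {a..b} \<Longrightarrow> u x \<le> M"
  shows "integral {a..b} u \<le> (b - a) * M"
proof -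
  have "integral {a..b} u \<le> integral {a..b} (\<lambda>_. M)"
    by (rule integral_le) (use assms in auto)
  then show ?thesis using assms by simp
qed

lemma int_split:
  fixes u :: "real \<Rightarrow> real"
  assumes "u integrable_on {a..b}" "a \<le> c" "c \<le> b"
  shows "integral {a..b} u = integral {a..c} u + integral {c..b} u"
  using Henstock_Kurzweil_Integration.integral_combine[OF assms(2,3,1)] by simp

lemma star_shape:
  fixes G G' :: "real \<Rightarrow> real"
  assumes cont: "continuous_on {0..} G" and G0: "G 0 = 0"
    and der: "\<And>s. s > 0 \<Longrightarrow> (G has_real_derivative G' s) (at s)"
    and mono: "\<And>s t. 0 < s \<Longrightarrow> s \<le> t \<Longrightarrow> G' s \<le> G' t"
    and ab: "0 < a" "a \<le> b"
  shows "G a * b \<le> G b * a"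
proof (cases "a = b")
  case True then show ?thesis by simp
next
  case False
  then have ab': "a < b" using ab by simp
  have c1: "continuous_on {0..a} G" using cont by (rule continuous_on_subset) auto
  have c2: "continuous_on {a..b} G" using cont ab by (intro continuous_on_subset[OF cont]) auto
  have dif: "G differentiable (at x)" if "x > 0" for x
    using der[OF that] real_differentiable_def by blast
  obtain l z where z: "0 < z" "z < a" "DERIV G z :> l" "G a - G 0 = (a - 0) * l"
    using MVT[OF ab(1) c1] dif by blast
  have l: "l = G' z" using z der DERIV_unique by blast
  obtain l2 z2 where z2: "a < z2" "z2 < b" "DERIV G z2 :> l2" "G b - G a = (b - a) * l2"
    using MVT[OF ab' c2] dif ab by (meson less_trans)
  have l2: "l2 = G' z2" using z2 der ab DERIV_unique by (metis less_trans)
  have "G a \<le> a * G' a" using z l G0 mono[of z a] ab by (simp add: mult_left_mono)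
  moreover have "G b - G a \<ge> (b - a) * G' a" using z2 l2 mono[of a z2] ab' ab
    by (simp add: mult_left_mono)
  moreover have "(b - a) * G a \<le> (b - a) * (a * G' a)"
    using calculation(1) ab' by (intro mult_left_mono) auto
  moreover have "(G b - G a) * a \<ge> ((b - a) * G' a) * a"
    using calculation(2) ab by (intro mult_right_mono) auto
  ultimately have "G b * a \<ge> G a * a + (b - a) * G a"
    by (simp add: algebra_simps)
  then show ?thesis by (simp add: algebra_simps)
qed



locale KO =
  fixes p :: real and n :: nat and f g :: "real \<Rightarrow> real"
  assumes p: "1 < p" and n: "n \<ge> 1"
    and fcont: "continuous_on {0..} f" and fsm: "strict_mono_on {0..} f" and f0: "f 0 = 0"
    and glip: "\<exists>L. L-lipschitz_on {0..} g" and gsm: "strict_mono_on {0..} g" and g0: "g 0 = 0"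
begin

definition L where "L = (SOME L. L-lipschitz_on {0..} g)"
lemma Lip: "L-lipschitz_on {0..} g"
  unfolding L_def using glip by (rule someI_ex)

abbreviation Gam where "Gam \<equiv> KO_Gamma p n g"
abbreviation FF where "FF \<equiv> KO_F f"
definition C where "C = (p - 1) / p * KO_c p n"
definition Gam' where "Gam' s = 2 * g (2 * s) + C * (p * s powr (p - 1))"

lemma c_pos: "KO_c p n > 0"
  unfolding KO_c_def using p n by auto
lemma C_pos: "C > 0"
  unfolding C_def using p c_pos by auto

lemma Gam_eq: "Gam s = integral {0..2 * s} g + C * s powr p"
  unfolding KO_Gamma_def C_def by simp

lemma g_less: "0 \<le> x \<Longrightarrow> x < y \<Longrightarrow> g x < g y"
  by (intro strict_mono_onD[OF gsm]) auto
lemma g_mono: "0 \<le> x \<Longrightarrow> x \<le> y \<Longrightarrow> g x \<le> g y"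
  using g_less by (cases "x = y") (auto simp: less_imp_le)
lemma g_nonneg: "0 \<le> x \<Longrightarrow> 0 \<le> g x"
  using g_mono[of 0 x] g0 by simp
lemma g_pos: "0 < x \<Longrightarrow> 0 < g x"
  using g_less[of 0 x] g0 by simp
lemma g_le: "0 \<le> x \<Longrightarrow> g x \<le> L * x"
  using lipschitz_onD[OF Lip, of x 0] g0 g_nonneg[of x] by (simp add: dist_real_def)
lemma L_nonneg: "L \<ge> 0" using Lip lipschitz_on_nonneg by blast
lemma g_cont: "continuous_on {0..} g"
  using Lip lipschitz_on_continuous_on by blast

lemma f_less: "0 \<le> x \<Longrightarrow> x < y \<Longrightarrow> f x < f y"
  by (intro strict_mono_onD[OF fsm]) auto
lemma f_mono: "0 \<le> x \<Longrightarrow> x \<le> y \<Longrightarrow> f x \<le> f y"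
  using f_less by (cases "x = y") (auto simp: less_imp_le)
lemma f_pos: "0 < x \<Longrightarrow> 0 < f x"
  using f_less[of 0 x] f0 by simp

lemma g_int: "g integrable_on {a..b}" if "a \<ge> 0"
  using that by (intro integrable_continuous_interval continuous_on_subset[OF g_cont]) auto
lemma f_int: "f integrable_on {a..b}" if "a \<ge> 0"
  using that by (intro integrable_continuous_interval continuous_on_subset[OF fcont]) auto

lemma IG_deriv: "s > 0 \<Longrightarrow> ((\<lambda>s. integral {0..s} g) has_real_derivative g s) (at s)"
proof -
  assume s: "s > 0"
  have "((\<lambda>s. integral {0..s} g) has_real_derivative g s) (at s within {0..s+1})"
    by (rule integral_has_real_derivative) (use s in \<open>auto intro: continuous_on_subset[OF g_cont]\<close>)
  then show ?thesis using s by (simp add: at_within_Icc_at)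
qed

lemma IF_deriv: "s > 0 \<Longrightarrow> (FF has_real_derivative f s) (at s)"
proof -
  assume s: "s > 0"
  have "((\<lambda>s. integral {0..s} f) has_real_derivative f s) (at s within {0..s+1})"
    by (rule integral_has_real_derivative) (use s in \<open>auto intro: continuous_on_subset[OF fcont]\<close>)
  then show ?thesis using s by (simp add: at_within_Icc_at KO_F_def[abs_def])
qed

lemma IG_cont: "continuous_on {0..} (\<lambda>s. integral {0..s} g)"
  by (rule cont_on_atLeast, rule indefinite_integral_continuous_1, rule g_int) auto

lemma FF_cont: "continuous_on {0..} FF"
  unfolding KO_F_def[abs_def]
  by (rule cont_on_atLeast, rule indefinite_integral_continuous_1, rule f_int) auto

lemma Gam_cont: "continuous_on {0..} Gam"
proof -
  have "continuous_on {0..} (\<lambda>s. integral {0..2 * s} g)"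
    by (rule continuous_on_compose2[OF IG_cont]) (auto intro!: continuous_intros)
  moreover have "continuous_on {0..} (\<lambda>s::real. s powr p)"
    by (rule continuous_on_powr') (use p in \<open>auto intro: continuous_intros\<close>)
  moreover have "Gam = (\<lambda>s. integral {0..2 * s} g + C * s powr p)"
    by (rule ext) (simp add: Gam_eq)
  ultimately show ?thesis by (auto intro!: continuous_intros)
qed

lemma Gam_deriv: "s > 0 \<Longrightarrow> (Gam has_real_derivative Gam' s) (at s)"
proof -
  assume s: "s > 0"
  have d1: "((\<lambda>s. integral {0..2 * s} g) has_real_derivative g (2 * s) * 2) (at s)"
  proof -
    have a1: "((\<lambda>s. integral {0..s} g) has_real_derivative g (2 * s)) (at (2 * s))"
      using IG_deriv s by simp
    have a2: "((\<lambda>s. 2 * s) has_real_derivative 2) (at s)"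
      by (auto intro!: derivative_eq_intros)
    show ?thesis using DERIV_chain2[OF a1 a2] .
  qed
  have d2: "((\<lambda>s. s powr p) has_real_derivative p * s powr (p - 1)) (at s)"
    using has_real_derivative_powr[OF s] .
  have "((\<lambda>s. integral {0..2 * s} g + C * s powr p) has_real_derivative g (2 * s) * 2 + C * (p * s powr (p - 1))) (at s)"
    by (intro DERIV_add d1 DERIV_cmult d2)
  moreover have "Gam = (\<lambda>s. integral {0..2 * s} g + C * s powr p)"
    by (rule ext) (simp add: Gam_eq)
  ultimately show ?thesis unfolding Gam'_def by (simp add: algebra_simps)
qed

lemma Gam'_pos: "s > 0 \<Longrightarrow> Gam' s > 0"
  unfolding Gam'_def using g_pos[of "2 * s"] C_pos p by (auto intro!: add_pos_pos mult_pos_pos)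

lemma Gam'_mono: "0 < s \<Longrightarrow> s \<le> t \<Longrightarrow> Gam' s \<le> Gam' t"
  unfolding Gam'_def using g_mono[of "2 * s" "2 * t"] C_pos p
  by (auto intro!: add_mono mult_left_mono powr_mono2)

lemma IG_mono: "0 \<le> a \<Longrightarrow> a \<le> b \<Longrightarrow> integral {0..a} g \<le> integral {0..b} g"
  by (rule integral_subset_le) (auto intro: g_int g_nonneg)

lemma Gam_less: "0 \<le> a \<Longrightarrow> a < b \<Longrightarrow> Gam a < Gam b"
  unfolding Gam_eq using IG_mono[of "2 * a" "2 * b"] C_pos p powr_less_mono2[of p a b]
  by (intro add_le_less_mono) auto

lemma Gam_sm: "strict_mono_on {0..} Gam"
  by (auto intro!: strict_mono_onI Gam_less)

lemma Gam0: "Gam 0 = 0"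
  unfolding Gam_eq using p by simp

lemma Gam_nonneg: "s \<ge> 0 \<Longrightarrow> Gam s \<ge> 0"
  using Gam_less[of 0 s] Gam0 by (cases "s = 0") auto

lemma Gam_ge_pow: "s \<ge> 0 \<Longrightarrow> C * s powr p \<le> Gam s"
  unfolding Gam_eq using IG_mono[of 0 "2 * s"] by simp

lemma Gam_ge_sg: "s \<ge> 0 \<Longrightarrow> s * g s \<le> Gam s"
proof -
  assume s: "s \<ge> 0"
  have "integral {0..2 * s} g = integral {0..s} g + integral {s..2 * s} g"
    by (rule int_split) (use s in \<open>auto intro: g_int\<close>)
  moreover have "(2 * s - s) * g s \<le> integral {s..2 * s} g"
    by (rule int_lower) (use s in \<open>auto intro: g_int g_mono\<close>)
  moreover have "integral {0..s} g \<ge> 0"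
    using IG_mono[of 0 s] s by simp
  moreover have "C * s powr p \<ge> 0" using C_pos by simp
  ultimately show ?thesis unfolding Gam_eq by simp
qed

lemma Gam_star: "0 \<le> lam \<Longrightarrow> lam \<le> 1 \<Longrightarrow> s \<ge> 0 \<Longrightarrow> Gam (lam * s) \<le> lam * Gam s"
proof -
  assume l: "0 \<le> lam" "lam \<le> 1" and s: "s \<ge> 0"
  show ?thesis
  proof (cases "lam * s = 0")
    case True
    then show ?thesis using Gam0 Gam_nonneg[OF s] l by auto
  next
    case False
    then have pos: "lam > 0" "s > 0" using l s by (auto simp: less_le)
    have "Gam (lam * s) * s \<le> Gam s * (lam * s)"
      by (rule star_shape[OF Gam_cont Gam0 Gam_deriv Gam'_mono])
         (use pos l in \<open>auto simp: mult_le_cancel_right1\<close>)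
    then show ?thesis using pos by (simp add: algebra_simps)
  qed
qed

lemma Gam_unbounded: "s \<ge> 1 \<Longrightarrow> s * g 1 \<le> Gam s"
  using Gam_ge_sg[of s] g_mono[of 1 s] by (smt (verit) mult_left_mono)

lemma Gam_surj: "Gam ` {0..} = {0..}"
proof
  show "Gam ` {0..} \<subseteq> {0..}" using Gam_nonneg by auto
  show "{0..} \<subseteq> Gam ` {0..}"
  proof
    fix y :: real assume y: "y \<in> {0..}"
    define b where "b = max 1 (y / g 1)"
    have g1: "g 1 > 0" using g_pos by simp
    have "y \<le> b * g 1" unfolding b_def using g1
      by (smt (verit) divide_le_eq max.cobounded2 mult.commute)
    also have "\<dots> \<le> Gam b" using Gam_unbounded[of b] b_def by simp
    finally have "y \<le> Gam b" .
    then obtain x where "0 \<le> x" "x \<le> b" "Gam x = y"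
      using IVT'[of Gam 0 y b] y Gam0 b_def continuous_on_subset[OF Gam_cont] by force
    then show "y \<in> Gam ` {0..}" by auto
  qed
qed

end


context KO begin

abbreviation GI where "GI \<equiv> KO_Gamma_inv p n g"

interpretation GamI: invf Gam 0
  by unfold_locales (rule Gam_cont, rule Gam_sm)

lemma GI_def': "GI = GamI.k"
  unfolding KO_Gamma_inv_def GamI.k_def ..

lemma GI_Gam: "s \<ge> 0 \<Longrightarrow> GI (Gam s) = s"
  unfolding GI_def' by (rule GamI.k_h)

lemma Gam_GI: "y \<ge> 0 \<Longrightarrow> Gam (GI y) = y"
  unfolding GI_def' by (rule GamI.h_k) (simp add: Gam_surj)

lemma GI_nonneg: "y \<ge> 0 \<Longrightarrow> GI y \<ge> 0"
  unfolding GI_def' by (rule GamI.k_in) (simp add: Gam_surj)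

lemma GI_le_iff: "y \<ge> 0 \<Longrightarrow> s \<ge> 0 \<Longrightarrow> s \<le> GI y \<longleftrightarrow> Gam s \<le> y"
  using GamI.h_le[of s "GI y"] GI_nonneg Gam_GI by simp

lemma GI_less_iff: "y \<ge> 0 \<Longrightarrow> s \<ge> 0 \<Longrightarrow> GI y < s \<longleftrightarrow> y < Gam s"
  using GI_le_iff by (meson not_le)

lemma GI_mono: "0 \<le> x \<Longrightarrow> x \<le> y \<Longrightarrow> GI x \<le> GI y"
  using GI_le_iff[of y "GI x"] GI_nonneg Gam_GI by simp

lemma GI0: "GI 0 = 0" using GI_Gam[of 0] Gam0 by simp

lemma GI_pos: "y > 0 \<Longrightarrow> GI y > 0"
  using GI_nonneg[of y] Gam_GI[of y] Gam0 by (cases "GI y = 0") auto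

lemma GI_cont: "continuous_on {0..} GI"
  using GamI.k_cont unfolding GI_def' Gam_surj .

lemma GI_deriv: "y > 0 \<Longrightarrow> (GI has_real_derivative inverse (Gam' (GI y))) (at y)"
proof -
  assume y: "y > 0"
  have "(GamI.k has_real_derivative inverse (Gam' (GI y))) (at (Gam (GI y)))"
    by (rule GamI.k_deriv) (use GI_pos[OF y] Gam_deriv Gam'_pos[of "GI y"] in auto)
  then show ?thesis using Gam_GI[of y] y unfolding GI_def' by simp
qed

lemma GI_div: "m \<ge> 1 \<Longrightarrow> y \<ge> 0 \<Longrightarrow> GI y / m \<le> GI (y / m)"
proof -
  assume m: "m \<ge> 1" and y: "y \<ge> 0"
  have "Gam ((1/m) * GI y) \<le> (1/m) * Gam (GI y)"
    by (rule Gam_star) (use m y GI_nonneg in auto)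
  then have "Gam (GI y / m) \<le> y / m" using Gam_GI y by simp
  then show ?thesis using GI_le_iff[of "y/m" "GI y / m"] m y GI_nonneg by simp
qed

lemma FF0: "FF 0 = 0" unfolding KO_F_def by simp

lemma FF_diff: "0 \<le> a \<Longrightarrow> a \<le> b \<Longrightarrow> FF b - FF a = integral {a..b} f"
  unfolding KO_F_def using int_split[OF f_int[of 0 b], of a] by simp

lemma FF_lower: "0 \<le> a \<Longrightarrow> a \<le> b \<Longrightarrow> (b - a) * f a \<le> FF b - FF a"
  using FF_diff int_lower[OF f_int, of a b "f a"] f_mono by auto

lemma FF_upper: "0 \<le> a \<Longrightarrow> a \<le> b \<Longrightarrow> FF b - FF a \<le> (b - a) * f b"
  using FF_diff int_upper[OF f_int, of a b "f b"] f_mono by auto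

lemma FF_le: "0 \<le> b \<Longrightarrow> FF b \<le> b * f b"
  using FF_upper[of 0 b] FF0 by simp

lemma FF_mono: "0 \<le> a \<Longrightarrow> a \<le> b \<Longrightarrow> FF a \<le> FF b"
proof -
  assume ab: "0 \<le> a" "a \<le> b"
  have "0 \<le> f a" using f_pos[of a] f0 ab by (cases "a = 0") auto
  then have "0 \<le> (b - a) * f a" using ab by simp
  then show ?thesis using FF_lower[OF ab] by simp
qed

lemma FF_pos: "0 < b \<Longrightarrow> 0 < FF b"
proof -
  assume b: "0 < b"
  have "(b - b/2) * f (b/2) \<le> FF b - FF (b/2)" using FF_lower[of "b/2" b] b by simp
  moreover have "FF (b/2) \<ge> 0" using FF_mono[of 0 "b/2"] FF0 b by simp
  moreover have "(b - b/2) * f (b/2) > 0" using b f_pos[of "b/2"] by simp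
  ultimately show ?thesis by simp
qed

end

locale KO2 = KO +
  assumes hyp: "(\<lambda>s. 1 / KO_Gamma_inv p n g (KO_F f s)) integrable_on {1..}"
begin

definition phi where "phi s = GI (FF s)"

lemma phi_pos: "s > 0 \<Longrightarrow> phi s > 0"
  unfolding phi_def using GI_pos FF_pos by simp

lemma phi_mono: "0 \<le> a \<Longrightarrow> a \<le> b \<Longrightarrow> phi a \<le> phi b"
  unfolding phi_def using GI_mono FF_mono FF_pos FF0 by (metis order.order_iff_strict)

lemma hint: "1 \<le> a \<Longrightarrow> (\<lambda>s. 1 / phi s) integrable_on {a..b}"
  using integrable_on_subinterval[OF hyp, of a b] unfolding phi_def by auto

lemma tail:
  assumes e: "e > 0"
  shows "\<exists>A\<ge>1. \<forall>a b. A \<le> a \<longrightarrow> a \<le> b \<longrightarrow> integral {a..b} (\<lambda>s. 1 / phi s) \<le> e"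
proof -
  define h where "h = (\<lambda>s. 1 / phi s)"
  define I where "I b = integral {1..b} h" for b
  have hyp': "h integrable_on {1..}" using hyp unfolding h_def phi_def .
  have hnn: "s \<ge> 1 \<Longrightarrow> h s \<ge> 0" for s unfolding h_def using phi_pos[of s] by simp
  have Ib: "I b \<le> integral {1..} h" for b
    unfolding I_def by (rule integral_subset_le) (use hyp' hint hnn in \<open>auto simp: h_def\<close>)
  have Imono: "1 \<le> a \<Longrightarrow> a \<le> b \<Longrightarrow> I a \<le> I b" for a b
    unfolding I_def by (rule integral_subset_le) (use hint hnn in \<open>auto simp: h_def\<close>)
  have Idiff: "1 \<le> a \<Longrightarrow> a \<le> b \<Longrightarrow> integral {a..b} h = I b - I a" for a b
    unfolding I_def using int_split[OF hint[of 1 b], of a] by (simp add: h_def)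
  define S where "S = Sup (I ` {1..})"
  have bdd: "bdd_above (I ` {1..})" using Ib by (intro bdd_aboveI[where M="integral {1..} h"]) auto
  have "S - e < S" using e by simp
  then obtain x where x: "x \<in> I ` {1..}" "S - e < x"
    unfolding S_def using less_cSupD[of "I ` {1..}"] by blast
  then obtain A where A: "A \<ge> 1" "S - e < I A" by auto
  have "integral {a..b} h \<le> e" if "A \<le> a" "a \<le> b" for a b
  proof -
    have "I b \<le> S" unfolding S_def using bdd that A by (intro cSup_upper) auto
    moreover have "I A \<le> I a" using Imono that A by simp
    ultimately show ?thesis using Idiff[of a b] that A by simp
  qed
  then show ?thesis using A unfolding h_def by blast
qed

lemma growth:
  assumes M: "M > 0"
  shows "\<exists>V. \<forall>v\<ge>V. Gam (M * v) \<le> FF v"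
proof -
  obtain A where A: "A \<ge> 1" "\<And>a b. A \<le> a \<Longrightarrow> a \<le> b \<Longrightarrow> integral {a..b} (\<lambda>s. 1 / phi s) \<le> 1 / (2 * M)"
    using tail[of "1 / (2 * M)"] M by auto
  have "Gam (M * v) \<le> FF v" if v: "v \<ge> 2 * A" for v
  proof -
    have v1: "v / 2 \<ge> 1" "v > 0" using v A by auto
    have "(v - v/2) * (1 / phi v) \<le> integral {v/2..v} (\<lambda>s. 1 / phi s)"
    proof (rule int_lower[OF hint])
      show "1 / phi v \<le> 1 / phi x" if "x \<in> {v/2..v}" for x
        using that v1 phi_pos[of x] phi_mono[of x v] by (intro divide_left_mono) auto
    qed (use v1 in auto)
    also have "\<dots> \<le> 1 / (2 * M)" using A v by simp
    finally have "v / 2 / phi v \<le> 1 / (2 * M)" by simp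
    then have "M * v \<le> phi v" using phi_pos[of v] v1 M by (simp add: field_simps)
    then show ?thesis using GI_le_iff[of "FF v" "M * v"] FF_pos[of v] v1 M unfolding phi_def by simp
  qed
  then show ?thesis by blast
qed

end


context KO begin
lemma Gam_mono: "0 \<le> a \<Longrightarrow> a \<le> b \<Longrightarrow> Gam a \<le> Gam b"
  using Gam_less[of a b] by (cases "a = b") auto
end

context KO2 begin

definition kap where "kap = 1 / KO_c p n + (real n - 1) / C"
definition K where "K = 2 / (1 - kap)"

lemma kap_lt1: "kap < 1" and kap_nonneg: "kap \<ge> 0"
proof -
  define c where "c = KO_c p n"
  have c: "c > 0" using c_pos c_def by simp
  have C: "C = (p - 1) / p * c" unfolding C_def c_def ..
  have pp: "p / (p - 1) > 1" using p by simp
  have "(p / (p - 1)) powr 1 \<le> (p / (p - 1)) powr p"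
    using pp p by (intro powr_mono) auto
  then have "p / (p - 1) \<le> (p / (p - 1)) powr p" using pp p by (simp add: abs_of_pos)
  then have "p / (p - 1) * real n \<le> c" unfolding c_def KO_c_def using n by (intro mult_right_mono) auto
  then have c2: "p * real n \<le> (p - 1) * c" using p by (simp add: field_simps)
  have "kap * ((p - 1) * c) = (p - 1) + (real n - 1) * p"
    unfolding kap_def c_def[symmetric] C using p c by (simp add: field_simps)
  also have "\<dots> < (p - 1) * c" using c2 by (simp add: algebra_simps)
  finally show "kap < 1" using p c by (simp add: mult_less_cancel_right2 )
  show "kap \<ge> 0" unfolding kap_def using n c_pos C_pos by auto
qed

lemma K_pos: "K > 0" unfolding K_def using kap_lt1 by simp

lemma sum_lt1: "kap + 1 / K < 1"
  unfolding K_def using kap_lt1 by (simp add: field_simps)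

lemma P1_exists: "\<exists>V\<ge>1. \<forall>v0\<ge>V. \<forall>t\<ge>0. Gam (K * t) \<le> FF (v0 + t) - FF v0"
proof -
  obtain V1 where V1: "\<And>v. v \<ge> V1 \<Longrightarrow> Gam ((2 * K) * v) \<le> FF v"
    using growth[of "2 * K"] K_pos by auto
  define V where "V = max 1 V1"
  have "Gam (K * t) \<le> FF (v0 + t) - FF v0" if v0: "v0 \<ge> V" and t: "t \<ge> 0" for v0 t
  proof (cases "t \<le> v0")
    case True
    have v0p: "v0 > 0" "v0 \<ge> V1" using v0 V_def by auto
    have "Gam (K * t) = Gam ((t / v0) * (K * v0))" using v0p by (simp add: mult.commute)
    also have "\<dots> \<le> (t / v0) * Gam (K * v0)"
      by (rule Gam_star) (use True t v0p K_pos in auto)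
    also have "\<dots> \<le> (t / v0) * Gam (2 * K * v0)"
      by (intro mult_left_mono Gam_mono) (use t v0p K_pos in auto)
    also have "\<dots> \<le> (t / v0) * FF v0"
      by (intro mult_left_mono V1) (use t v0p in auto)
    also have "\<dots> \<le> (t / v0) * (v0 * f v0)"
      by (intro mult_left_mono FF_le) (use t v0p in auto)
    also have "\<dots> = t * f v0" using v0p by simp
    also have "\<dots> \<le> FF (v0 + t) - FF v0" using FF_lower[of v0 "v0 + t"] t v0p by simp
    finally show ?thesis .
  next
    case False
    have v0p: "v0 > 0" "v0 + t \<ge> V1" using v0 V_def t by auto
    have "FF v0 \<le> v0 * f v0" using FF_le v0p by simp
    also have "\<dots> \<le> t * f v0" using False f_pos[of v0] v0p by (intro mult_right_mono) auto
    also have "\<dots> \<le> FF (v0 + t) - FF v0" using FF_lower[of v0 "v0 + t"] t v0p by simp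
    finally have a: "FF v0 \<le> FF (v0 + t) - FF v0" .
    have "Gam (K * t) \<le> Gam (K * (v0 + t))"
      by (intro Gam_mono) (use t v0p K_pos in auto)
    also have "\<dots> = Gam ((1/2) * (2 * K * (v0 + t)))" by simp
    also have "\<dots> \<le> (1/2) * Gam (2 * K * (v0 + t))"
      by (rule Gam_star) (use t v0p K_pos in auto)
    also have "\<dots> \<le> (1/2) * FF (v0 + t)" using V1[OF v0p(2)] by simp
    also have "\<dots> \<le> FF (v0 + t) - FF v0" using a by simp
    finally show ?thesis .
  qed
  moreover have "V \<ge> 1" unfolding V_def by simp
  ultimately show ?thesis by blast
qed

end


context KO begin

definition q where "q = min p 2"
lemma q: "1 < q" "q \<le> p" "q \<le> 2" unfolding q_def using p by auto

lemma Gam_upper: "0 \<le> s \<Longrightarrow> s \<le> 1 \<Longrightarrow> Gam s \<le> (4 * L + C) * s powr q"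
proof -
  assume s: "0 \<le> s" "s \<le> 1"
  have "integral {0..2 * s} g \<le> (2 * s - 0) * g (2 * s)"
    by (rule int_upper) (use s in \<open>auto intro: g_int g_mono\<close>)
  also have "\<dots> \<le> (2 * s) * (L * (2 * s))"
  proof -
    have "g (2 * s) \<le> L * (2 * s)" using g_le s by simp
    then have "(2 * s) * g (2 * s) \<le> (2 * s) * (L * (2 * s))" using s by (intro mult_left_mono) auto
    then show ?thesis by simp
  qed
  also have "\<dots> = 4 * L * s\<^sup>2" by (simp add: power2_eq_square)
  also have "\<dots> \<le> 4 * L * s powr q"
  proof (cases "s = 0")
    case True then show ?thesis using q by simp
  next
    case False
    then have "s\<^sup>2 = s powr 2" using s by (simp add: powr_numeral)
    moreover have "s powr 2 \<le> s powr q" using powr_mono'[of q 2 s] q s by simp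
    ultimately show ?thesis using L_nonneg by (intro mult_left_mono) auto
  qed
  finally have a: "integral {0..2 * s} g \<le> 4 * L * s powr q" .
  have "s powr p \<le> s powr q" using powr_mono'[of q p s] q s by simp
  then have "C * s powr p \<le> C * s powr q" using C_pos by simp
  then show ?thesis unfolding Gam_eq using a by (simp add: algebra_simps)
qed

end

locale KO3 = KO2 +
  fixes v0 :: real
  assumes v0_1: "v0 \<ge> 1"
    and P1: "\<And>t. t \<ge> 0 \<Longrightarrow> Gam (K * t) \<le> FF (v0 + t) - FF v0"
begin

definition psi where "psi x = GI (FF x - FF v0)"

lemma D_nonneg: "x \<ge> v0 \<Longrightarrow> FF x - FF v0 \<ge> 0"
  using FF_mono[of v0 x] v0_1 by simp

lemma D_lower: "x \<ge> v0 \<Longrightarrow> (x - v0) * f v0 \<le> FF x - FF v0"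
  using FF_lower[of v0 x] v0_1 by simp

lemma D_upper: "x \<ge> v0 \<Longrightarrow> FF x - FF v0 \<le> (x - v0) * f x"
  using FF_upper[of v0 x] v0_1 by simp

lemma fv0: "f v0 > 0" using f_pos v0_1 by simp

lemma psi_v0: "psi v0 = 0" unfolding psi_def using GI0 by simp

lemma psi_pos: "x > v0 \<Longrightarrow> psi x > 0"
  unfolding psi_def using D_lower[of x] fv0 by (intro GI_pos) (smt (verit) mult_pos_pos)

lemma psi_nonneg: "x \<ge> v0 \<Longrightarrow> psi x \<ge> 0"
  unfolding psi_def using D_nonneg GI_nonneg by simp

lemma Gam_psi: "x \<ge> v0 \<Longrightarrow> Gam (psi x) = FF x - FF v0"
  unfolding psi_def using D_nonneg Gam_GI by simp

lemma psi_mono: "v0 \<le> x \<Longrightarrow> x \<le> y \<Longrightarrow> psi x \<le> psi y"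
  unfolding psi_def using D_nonneg FF_mono[of x y] v0_1 by (intro GI_mono) auto

lemma psi_cont: "continuous_on {v0..} psi"
  unfolding psi_def
proof (rule continuous_on_compose2[OF GI_cont])
  show "continuous_on {v0..} (\<lambda>x. FF x - FF v0)"
    by (intro continuous_intros continuous_on_subset[OF FF_cont]) (use v0_1 in auto)
  show "(\<lambda>x. FF x - FF v0) ` {v0..} \<subseteq> {0..}" using D_nonneg by auto
qed

lemma psi_deriv: "x > v0 \<Longrightarrow> (psi has_real_derivative inverse (Gam' (psi x)) * f x) (at x)"
proof -
  assume x: "x > v0"
  have y: "FF x - FF v0 > 0" using psi_pos[OF x] unfolding psi_def using GI0 D_nonneg[of x] x
    by (metis less_eq_real_def)
  have d1: "(GI has_real_derivative inverse (Gam' (psi x))) (at (FF x - FF v0))"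
    using GI_deriv[OF y] unfolding psi_def .
  have d2: "((\<lambda>x. FF x - FF v0) has_real_derivative f x) (at x)"
    using IF_deriv[of x] x v0_1 by (auto intro!: derivative_eq_intros)
  show ?thesis using DERIV_chain2[OF d1 d2] unfolding psi_def[abs_def] by simp
qed

lemma psi_K: "x \<ge> v0 \<Longrightarrow> K * (x - v0) \<le> psi x"
  unfolding psi_def using GI_le_iff[of "FF x - FF v0" "K * (x - v0)"] P1[of "x - v0"] D_nonneg K_pos
  by simp

lemma psi_tail: "x \<ge> v0 + 1 \<Longrightarrow> phi x / (v0 + 1) \<le> psi x"
proof -
  assume x: "x \<ge> v0 + 1"
  have "f v0 \<le> (x - v0) * f v0" using fv0 x by simp
  also have "\<dots> \<le> FF x - FF v0" using D_lower x by simp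
  finally have a: "f v0 \<le> FF x - FF v0" .
  have "FF v0 \<le> v0 * f v0" using FF_le v0_1 by simp
  also have "\<dots> \<le> v0 * (FF x - FF v0)" using a v0_1 by simp
  finally have "FF x \<le> (v0 + 1) * (FF x - FF v0)" by (simp add: algebra_simps)
  then have b: "FF x / (v0 + 1) \<le> FF x - FF v0" using v0_1 by (simp add: field_simps)
  have "phi x / (v0 + 1) \<le> GI (FF x / (v0 + 1))"
    unfolding phi_def by (rule GI_div) (use v0_1 x FF_pos[of x] in auto)
  also have "\<dots> \<le> psi x" unfolding psi_def
    by (rule GI_mono[OF _ b]) (use v0_1 x FF_pos[of x] in auto)
  finally show ?thesis .
qed

lemma psi_near: "\<exists>mu>0. \<forall>x. v0 < x \<longrightarrow> x \<le> v0 + 1 \<longrightarrow> mu * (x - v0) powr (1 / q) \<le> psi x"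
proof -
  define A where "A = 4 * L + C"
  have A: "A > 0" unfolding A_def using L_nonneg C_pos by simp
  define mu where "mu = min 1 (f v0 / A)"
  have mu: "mu > 0" "mu \<le> 1" "A * mu \<le> f v0" unfolding mu_def using fv0 A
    by (auto simp: field_simps min_def)
  have "mu * (x - v0) powr (1 / q) \<le> psi x" if x: "v0 < x" "x \<le> v0 + 1" for x
  proof -
    define t where "t = x - v0"
    have t: "0 < t" "t \<le> 1" using x t_def by auto
    define s where "s = mu * t powr (1 / q)"
    have s: "0 \<le> s" "s \<le> 1"
    proof -
      have "t powr (1 / q) \<le> 1" using powr_mono'[of 0 "1/q" t] t q by simp
      then show "s \<le> 1" "0 \<le> s" unfolding s_def using mu
        by (auto simp: mult_le_one)
    qed
    have "s powr q = mu powr q * t" unfolding s_def using mu t q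
      by (simp add: powr_mult powr_powr)
    also have "\<dots> \<le> mu * t" using powr_mono'[of 1 q mu] mu q t by (intro mult_right_mono) auto
    finally have sq: "s powr q \<le> mu * t" .
    have "Gam s \<le> A * s powr q" using Gam_upper[OF s] unfolding A_def .
    also have "\<dots> \<le> A * (mu * t)" using sq A by simp
    also have "\<dots> \<le> f v0 * t" using mu t by (simp add: mult.assoc[symmetric] mult_right_mono)
    also have "\<dots> \<le> FF x - FF v0" using D_lower[of x] x unfolding t_def by (simp add: mult.commute)
    finally have "Gam s \<le> FF x - FF v0" .
    then have "s \<le> psi x" unfolding psi_def using GI_le_iff[of "FF x - FF v0" s] D_nonneg[of x] x s by simp
    then show ?thesis unfolding s_def t_def .
  qed
  then show ?thesis using mu by blast
qed

end


context KO3 begin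

definition ip where "ip t = 1 / psi t"

lemma ip_nonneg: "t \<ge> v0 \<Longrightarrow> ip t \<ge> 0"
  unfolding ip_def using psi_nonneg by simp

lemma ip_cont: "v0 < a \<Longrightarrow> continuous_on {a..b} ip"
proof -
  assume a: "v0 < a"
  have "\<forall>t\<in>{a..b}. psi t \<noteq> 0"
  proof
    fix t assume "t \<in> {a..b}"
    then have "psi t > 0" using a by (intro psi_pos) auto
    then show "psi t \<noteq> 0" by simp
  qed
  then show ?thesis unfolding ip_def using a
    by (intro continuous_intros continuous_on_subset[OF psi_cont]) auto
qed

lemma ip_cont_oc: "continuous_on {v0<..b} ip"
proof -
  have "\<forall>t\<in>{v0<..b}. psi t \<noteq> 0" using psi_pos by force
  then show ?thesis unfolding ip_def
    by (intro continuous_intros continuous_on_subset[OF psi_cont]) auto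
qed

lemma ip_int_near: "ip integrable_on {v0..v0+1}"
proof -
  obtain mu where mu: "mu > 0" "\<And>x. v0 < x \<Longrightarrow> x \<le> v0 + 1 \<Longrightarrow> mu * (x - v0) powr (1 / q) \<le> psi x"
    using psi_near by blast
  define beta where "beta t = (1 / mu) * (t - v0) powr (- (1 / q))" for t
  define G where "G t = (1 / mu) * (q / (q - 1)) * (t - v0) powr (1 - 1 / q)" for t
  have q1: "q > 1" using q by simp
  have "(beta has_integral (G (v0+1) - G v0)) {v0..v0+1}"
  proof (rule fundamental_theorem_of_calculus_interior)
    show "continuous_on {v0..v0 + 1} G"
      unfolding G_def using q1
      by (intro continuous_intros continuous_on_powr') (auto simp: field_simps)
    show "(G has_vector_derivative beta x) (at x)" if x: "x \<in> {v0<..<v0 + 1}" for x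
    proof -
      have xp: "x - v0 > 0" using x by simp
      have d1: "((\<lambda>z. z powr (1 - 1/q)) has_real_derivative (1 - 1/q) * (x - v0) powr (1 - 1/q - 1)) (at (x - v0))"
        by (rule has_real_derivative_powr[OF xp])
      have d2: "((\<lambda>t. t - v0) has_real_derivative 1) (at x)"
        by (auto intro!: derivative_eq_intros)
      have "((\<lambda>t. (t - v0) powr (1 - 1/q)) has_real_derivative (1 - 1/q) * (x - v0) powr (1 - 1/q - 1) * 1) (at x)"
        using DERIV_chain2[OF d1 d2] .
      then have "(G has_real_derivative (1 / mu) * (q / (q - 1)) * ((1 - 1/q) * (x - v0) powr (1 - 1/q - 1) * 1)) (at x)"
        unfolding G_def[abs_def] by (intro DERIV_cmult)
      moreover have "(1 / mu) * (q / (q - 1)) * ((1 - 1/q) * (x - v0) powr (1 - 1/q - 1) * 1) = beta x"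
      proof -
        have e: "(q / (q - 1)) * (1 - 1/q) = 1" using q1 by (simp add: field_simps)
        have "(1 / mu) * (q / (q - 1)) * ((1 - 1/q) * (x - v0) powr (1 - 1/q - 1) * 1)
              = (1 / mu) * ((q / (q - 1)) * (1 - 1/q)) * (x - v0) powr (1 - 1/q - 1)" by simp
        also have "\<dots> = beta x" unfolding e beta_def by simp
        finally show ?thesis .
      qed
      ultimately show ?thesis by (simp add: has_real_derivative_iff_has_vector_derivative)
    qed
  qed simp
  then have bint: "beta integrable_on {v0..v0+1}" by blast
  have neg: "negligible ({v0..v0+1} - {v0<..v0+1} \<union> ({v0<..v0+1} - {v0..v0+1}))"
    by (rule negligible_subset[of "{v0}"]) auto
  have bint2: "beta integrable_on {v0<..v0+1}"
    using bint integrable_spike_set_eq[OF neg] by blast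
  have "ip integrable_on {v0<..v0+1}"
  proof (rule measurable_bounded_by_integrable_imp_integrable_real[OF _ bint2])
    show "ip \<in> borel_measurable (lebesgue_on {v0<..v0 + 1})"
      by (rule continuous_imp_measurable_on_sets_lebesgue[OF ip_cont_oc]) simp
    show "{v0<..v0 + 1} \<in> sets lebesgue" by simp
    show "\<bar>ip x\<bar> \<le> beta x" if x: "x \<in> {v0<..v0 + 1}" for x
    proof -
      have xp: "x - v0 > 0" using x by simp
      have pp: "psi x > 0" using psi_pos x by simp
      have m: "mu * (x - v0) powr (1 / q) \<le> psi x" using mu x by simp
      have mp: "mu * (x - v0) powr (1 / q) > 0" using mu xp by simp
      have "\<bar>ip x\<bar> = 1 / psi x" unfolding ip_def using pp by simp
      also have "\<dots> \<le> 1 / (mu * (x - v0) powr (1 / q))"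
        using m mp by (intro divide_left_mono) auto
      also have "\<dots> = beta x" unfolding beta_def using xp by (simp add: powr_minus field_simps)
      finally show ?thesis .
    qed
  qed
  then show ?thesis using integrable_spike_set_eq[OF neg] by blast
qed

lemma ip_int: "b \<ge> v0 \<Longrightarrow> ip integrable_on {v0..b}"
proof -
  assume b: "b \<ge> v0"
  show ?thesis
  proof (cases "b \<le> v0 + 1")
    case True
    then show ?thesis using integrable_on_subinterval[OF ip_int_near, of v0 b] by auto
  next
    case False
    have "ip integrable_on {v0+1..b}"
      by (rule integrable_continuous_interval, rule ip_cont) simp
    then show ?thesis using Henstock_Kurzweil_Integration.integrable_combine[OF _ _ ip_int_near] False by simp
  qed
qed

definition rho where "rho x = integral {v0..x} ip"

lemma rho_v0: "rho v0 = 0" unfolding rho_def by simp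

lemma rho_diff: "v0 \<le> a \<Longrightarrow> a \<le> b \<Longrightarrow> rho b - rho a = integral {a..b} ip"
  unfolding rho_def using int_split[OF ip_int[of b], of a] by simp

lemma ip_int_gen: "v0 \<le> a \<Longrightarrow> ip integrable_on {a..b}"
  using integrable_on_subinterval[OF ip_int[of "max b v0"], of a b] by auto

lemma rho_mono: "v0 \<le> a \<Longrightarrow> a \<le> b \<Longrightarrow> rho a \<le> rho b"
  using rho_diff[of a b] integral_nonneg[OF ip_int_gen[of a b]] ip_nonneg by force

lemma rho_less: "v0 \<le> a \<Longrightarrow> a < b \<Longrightarrow> rho a < rho b"
proof -
  assume ab: "v0 \<le> a" "a < b"
  define m where "m = (a + b) / 2"
  have m: "a < m" "m < b" using ab m_def by auto
  have "rho m - rho a \<ge> 0" using rho_mono[of a m] ab m by simp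
  moreover have "(b - m) * ip b \<le> integral {m..b} ip"
  proof (rule int_lower[OF ip_int_gen])
    fix x assume x: "x \<in> {m..b}"
    then have "x > v0" using ab m by auto
    then show "ip b \<le> ip x" unfolding ip_def using psi_pos psi_mono[of x b] x
      by (intro divide_left_mono) auto
  qed (use ab m in auto)
  moreover have "rho b - rho m = integral {m..b} ip" using rho_diff[of m b] ab m by simp
  moreover have "(b - m) * ip b > 0" using m psi_pos[of b] ab unfolding ip_def by simp
  ultimately show ?thesis by simp
qed

lemma rho_sm: "strict_mono_on {v0..} rho"
  by (auto intro!: strict_mono_onI rho_less)

lemma rho_lower: "v0 < x \<Longrightarrow> (x - v0) / psi x \<le> rho x"
proof -
  assume x: "v0 < x"
  define ip' where "ip' t = (if t = v0 then ip x else ip t)" for t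
  have eq: "integral {v0..x} ip = integral {v0..x} ip'"
    by (rule integral_spike[of "{v0}"]) (auto simp: ip'_def)
  have int: "ip' integrable_on {v0..x}"
    by (rule integrable_spike[OF ip_int[of x], of "{v0}"]) (use x in \<open>auto simp: ip'_def\<close>)
  have "(x - v0) * ip x \<le> integral {v0..x} ip'"
  proof (rule int_lower[OF int])
    fix t assume t: "t \<in> {v0..x}"
    show "ip x \<le> ip' t"
    proof (cases "t = v0")
      case False
      then have "t > v0" using t by auto
      then show ?thesis unfolding ip'_def ip_def using psi_pos psi_mono[of t x] t False
        by (auto intro!: divide_left_mono)
    qed (simp add: ip'_def)
  qed (use x in auto)
  then show ?thesis unfolding rho_def eq ip_def by simp
qed

lemma rho_cont: "continuous_on {v0..} rho"
  unfolding rho_def[abs_def]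
  by (rule cont_on_atLeast, rule indefinite_integral_continuous_1, rule ip_int) auto

lemma rho_deriv: "v0 < x \<Longrightarrow> (rho has_real_derivative ip x) (at x)"
proof -
  assume x: "v0 < x"
  have c: "continuous_on {(v0 + x) / 2..x + 1} ip" by (rule ip_cont) (use x in auto)
  have "isCont ip x" by (rule continuous_on_interior[OF c]) (use x in auto)
  then have cw: "continuous (at x within ({v0..x+1} - {})) ip"
    by (simp add: continuous_at_imp_continuous_at_within)
  have "((\<lambda>u. integral {v0..u} ip) has_vector_derivative ip x) (at x within ({v0..x+1} - {}))"
    by (rule integral_has_vector_derivative_continuous_at[OF ip_int _ _ cw]) (use x in auto)
  then show ?thesis using x
    by (simp add: rho_def[abs_def] at_within_Icc_at has_real_derivative_iff_has_vector_derivative)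
qed

definition B where "B = rho (v0 + 1) + (v0 + 1) * integral {1..} (\<lambda>s. 1 / phi s)"

lemma hyp_nonneg: "integral {1..} (\<lambda>s. 1 / phi s) \<ge> 0"
proof (rule integral_nonneg)
  show "(\<lambda>s. 1 / phi s) integrable_on {1..}" using hyp unfolding phi_def .
  fix x :: real assume "x \<in> {1..}"
  then have "phi x > 0" by (intro phi_pos) auto
  then show "0 \<le> 1 / phi x" by simp
qed

lemma rho_bdd: "x \<ge> v0 \<Longrightarrow> rho x \<le> B"
proof -
  assume x: "x \<ge> v0"
  show ?thesis
  proof (cases "x \<le> v0 + 1")
    case True
    then show ?thesis using rho_mono[of x "v0+1"] x hyp_nonneg v0_1 unfolding B_def
      by (smt (verit) mult_nonneg_nonneg)
  next
    case False
    have hint1: "(\<lambda>s. 1 / phi s) integrable_on {v0+1..x}" using hint v0_1 by simp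
    have "rho x - rho (v0+1) = integral {v0+1..x} ip" using rho_diff[of "v0+1" x] False by simp
    also have "\<dots> \<le> integral {v0+1..x} (\<lambda>s. (v0 + 1) * (1 / phi s))"
    proof (rule integral_le[OF ip_int_gen])
      show "(\<lambda>s. (v0 + 1) * (1 / phi s)) integrable_on {v0 + 1..x}"
        using integrable_on_cmult_left[OF hint1, of "v0+1"] by simp
      fix s assume s: "s \<in> {v0 + 1..x}"
      have ph: "phi s > 0" using phi_pos s v0_1 by simp
      have "phi s / (v0 + 1) \<le> psi s" using psi_tail s by simp
      moreover have "phi s / (v0 + 1) > 0" using ph v0_1 by simp
      moreover have "psi s > 0" using s v0_1 by (intro psi_pos) auto
      ultimately have "1 / psi s \<le> 1 / (phi s / (v0 + 1))" by (intro divide_left_mono mult_pos_pos) auto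
      then show "ip s \<le> (v0 + 1) * (1 / phi s)" unfolding ip_def by simp
    qed simp
    also have "\<dots> = (v0 + 1) * integral {v0+1..x} (\<lambda>s. 1 / phi s)"
      by (rule integral_mult_right)
    also have "\<dots> \<le> (v0 + 1) * integral {1..} (\<lambda>s. 1 / phi s)"
    proof (intro mult_left_mono)
      show "integral {v0+1..x} (\<lambda>s. 1 / phi s) \<le> integral {1..} (\<lambda>s. 1 / phi s)"
        by (rule integral_subset_le) (use hint1 hyp v0_1 phi_pos in \<open>auto simp: phi_def less_le\<close>)
    qed (use v0_1 in auto)
    finally show ?thesis unfolding B_def by simp
  qed
qed

end


context KO3 begin

definition R where "R = Sup (rho ` {v0..})"

lemma bdd_rho: "bdd_above (rho ` {v0..})"
  using rho_bdd by (intro bdd_aboveI[where M=B]) auto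

lemma rho_le_R: "x \<ge> v0 \<Longrightarrow> rho x \<le> R"
  unfolding R_def using bdd_rho by (intro cSup_upper) auto

lemma rho_lt_R: "x \<ge> v0 \<Longrightarrow> rho x < R"
  using rho_less[of x "x+1"] rho_le_R[of "x+1"] by simp

lemma R_pos: "R > 0" using rho_lt_R[of v0] rho_v0 by simp

lemma rho_nonneg: "x \<ge> v0 \<Longrightarrow> rho x \<ge> 0"
  using rho_mono[of v0 x] rho_v0 by simp

lemma rho_image: "rho ` {v0..} = {0..<R}"
proof
  show "rho ` {v0..} \<subseteq> {0..<R}" using rho_nonneg rho_lt_R by auto
  show "{0..<R} \<subseteq> rho ` {v0..}"
  proof
    fix r assume r: "r \<in> {0..<R}"
    then obtain y where y: "y \<in> rho ` {v0..}" "r < y"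
      unfolding R_def using less_cSupD[of "rho ` {v0..}" r] by auto
    then obtain x where x: "x \<ge> v0" "r < rho x" by auto
    have "continuous_on {v0..x} rho" using rho_cont by (rule continuous_on_subset) auto
    then obtain z where "v0 \<le> z" "z \<le> x" "rho z = r"
      using IVT'[of rho v0 r x] x r rho_v0 by auto
    then show "r \<in> rho ` {v0..}" by auto
  qed
qed

interpretation RI: invf rho v0
  by unfold_locales (rule rho_cont, rule rho_sm)

abbreviation vv where "vv \<equiv> RI.k"

lemma vv_ge: "r \<in> {0..<R} \<Longrightarrow> vv r \<ge> v0"
  using RI.k_in rho_image by auto

lemma rho_vv: "r \<in> {0..<R} \<Longrightarrow> rho (vv r) = r"
  using RI.h_k rho_image by auto

lemma vv0: "vv 0 = v0"
  using RI.k_h[of v0] rho_v0 by simp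

lemma vv_gt: "r \<in> {0<..<R} \<Longrightarrow> vv r > v0"
  using vv_ge[of r] rho_vv[of r] rho_v0 by (cases "vv r = v0") auto

lemma vv_cont: "continuous_on {0..<R} vv"
  using RI.k_cont rho_image by simp

lemma vv_deriv: "r \<in> {0<..<R} \<Longrightarrow> (vv has_real_derivative psi (vv r)) (at r)"
proof -
  assume r: "r \<in> {0<..<R}"
  have x: "vv r > v0" using vv_gt r by simp
  have "(vv has_real_derivative inverse (ip (vv r))) (at (rho (vv r)))"
    by (rule RI.k_deriv[OF x rho_deriv[OF x]]) (use psi_pos[OF x] in \<open>simp add: ip_def\<close>)
  then show ?thesis using rho_vv[of r] r psi_pos[OF x] by (simp add: ip_def)
qed

definition dv where "dv r = psi (vv r)"

lemma dv_cont: "continuous_on {0..<R} dv"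
  unfolding dv_def[abs_def]
  by (rule continuous_on_compose2[OF psi_cont vv_cont]) (use vv_ge in auto)

lemma dv0: "dv 0 = 0" unfolding dv_def vv0 psi_v0 ..

lemma dv_nonneg: "r \<in> {0..<R} \<Longrightarrow> dv r \<ge> 0"
  unfolding dv_def using psi_nonneg vv_ge by simp

lemma vv_deriv0: "(vv has_real_derivative dv 0) (at 0 within {0..<R})"
  unfolding has_field_derivative_iff dv0
proof (rule tendsto_sandwich[where f="\<lambda>_. 0" and h=dv])
  have ev: "eventually (\<lambda>y. y \<in> {0<..<R}) (at 0 within {0..<R})"
    unfolding eventually_at_filter by (rule always_eventually) auto
  show "eventually (\<lambda>y. 0 \<le> (vv y - vv 0) / (y - 0)) (at 0 within {0..<R})"
    using ev by eventually_elim (use vv_ge vv0 in auto)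
  show "eventually (\<lambda>y. (vv y - vv 0) / (y - 0) \<le> dv y) (at 0 within {0..<R})"
    using ev
  proof eventually_elim
    case (elim y)
    have x: "vv y > v0" using vv_gt elim by simp
    have "(vv y - v0) / psi (vv y) \<le> y" using rho_lower[OF x] rho_vv[of y] elim by simp
    then have "vv y - v0 \<le> y * psi (vv y)" using psi_pos[OF x] by (simp add: field_simps)
    then show ?case using elim vv0 unfolding dv_def by (simp add: field_simps)
  qed
  show "((\<lambda>_. 0) \<longlongrightarrow> 0) (at 0 within {0..<R})" by simp
  have "(dv \<longlongrightarrow> dv 0) (at 0 within {0..<R})"
    using dv_cont R_pos unfolding continuous_on_def by auto
  then show "(dv \<longlongrightarrow> 0) (at 0 within {0..<R})" using dv0 by simp
qed

lemma vv_mono: "mono_on {0..<R} vv"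
proof (rule mono_onI)
  fix r s assume rs: "r \<in> {0..<R}" "s \<in> {0..<R}" "r \<le> s"
  show "vv r \<le> vv s"
  proof (rule ccontr)
    assume "\<not> vv r \<le> vv s"
    then have "rho (vv s) < rho (vv r)" using rho_less vv_ge rs by simp
    then show False using rho_vv rs by simp
  qed
qed

lemma vv_lim: "filterlim vv at_top (at_left R)"
  unfolding filterlim_at_top
proof
  fix Z
  define x where "x = max Z v0"
  have x: "x \<ge> v0" "x \<ge> Z" unfolding x_def by auto
  have ev: "eventually (\<lambda>y. y \<in> {rho x<..<R}) (at_left R)"
    by (rule eventually_at_left_real) (use rho_lt_R x in auto)
  show "eventually (\<lambda>y. Z \<le> vv y) (at_left R)"
    using ev
  proof eventually_elim
    case (elim y)
    have y: "y \<in> {0..<R}" using elim rho_nonneg[OF x(1)] by auto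
    have "x \<le> vv y"
    proof (rule ccontr)
      assume "\<not> x \<le> vv y"
      then have "rho (vv y) < rho x" using rho_less vv_ge[OF y] by simp
      then show False using rho_vv[OF y] elim by simp
    qed
    then show ?case using x by simp
  qed
qed

end


context KO3 begin

lemma ode:
  assumes r: "r \<in> {0<..<R}"
  shows "\<exists>w'. ((\<lambda>s. dv s powr (p - 1)) has_real_derivative w') (at r)
               \<and> w' + (real n - 1) / r * dv r powr (p - 1) < f (vv r) - g (dv r)"
proof -
  define x where "x = vv r"
  define s where "s = psi x"
  have x: "x > v0" unfolding x_def using vv_gt r by simp
  have sp: "s > 0" unfolding s_def using psi_pos x by simp
  have rp: "r > 0" using r by simp
  have rx: "rho x = r" unfolding x_def using rho_vv r by simp
  have fx: "f x > 0" using f_pos x v0_1 by simp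
  define c where "c = KO_c p n"
  have c: "c > 0" unfolding c_def using c_pos .
  have Cc: "C * p = (p - 1) * c" unfolding C_def c_def using p by simp
  define P where "P = s powr (p - 1)"
  have P: "P > 0" unfolding P_def using sp by simp
  define w' where "w' = (p - 1) * s powr (p - 1 - 1) * (inverse (Gam' s) * f x * s)"
  have d_vv: "(vv has_real_derivative s) (at r)" unfolding s_def x_def using vv_deriv r by simp
  have d_psi: "(psi has_real_derivative inverse (Gam' s) * f x) (at (vv r))"
    using psi_deriv[OF x] unfolding s_def x_def .
  have d1: "(dv has_real_derivative inverse (Gam' s) * f x * s) (at r)"
    using DERIV_chain2[OF d_psi d_vv] unfolding dv_def[abs_def] .
  have d2: "((\<lambda>z. z powr (p - 1)) has_real_derivative (p - 1) * s powr (p - 1 - 1)) (at (dv r))"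
    using has_real_derivative_powr[OF sp] unfolding dv_def x_def[symmetric] s_def[symmetric] .
  have dw: "((\<lambda>s. dv s powr (p - 1)) has_real_derivative w') (at r)"
    using DERIV_chain2[OF d2 d1] unfolding w'_def .
  have ss: "s powr (p - 1 - 1) * s = P"
  proof -
    have "s powr (p - 1 - 1) * s = s powr (p - 1 - 1) * s powr 1" using sp by simp
    also have "\<dots> = s powr (p - 1 - 1 + 1)" by (rule powr_add[symmetric])
    also have "\<dots> = P" unfolding P_def by simp
    finally show ?thesis .
  qed
  have w'eq: "w' = (p - 1) * P * f x / Gam' s"
    unfolding w'_def ss[symmetric] by (simp add: field_simps)
  have G'ge: "Gam' s \<ge> (p - 1) * c * P"
    unfolding Gam'_def P_def using g_nonneg[of "2 * s"] sp Cc
    by (simp add: mult.assoc[symmetric])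
  have a: "w' \<le> f x / c"
  proof -
    have "w' \<le> (p - 1) * P * f x / ((p - 1) * c * P)"
      unfolding w'eq using G'ge P fx p c Gam'_pos[OF sp] by (intro divide_left_mono mult_pos_pos) auto
    also have "\<dots> = f x / c" using P p by simp
    finally show ?thesis .
  qed
  have rl: "(x - v0) / s \<le> r" using rho_lower[OF x] rx unfolding s_def by simp
  have GamS: "Gam s = FF x - FF v0" unfolding s_def using Gam_psi x by simp
  have spow: "C * s powr p \<le> (x - v0) * f x"
    using Gam_ge_pow[of s] sp GamS D_upper[of x] x by simp
  have b: "P / r \<le> f x / C"
  proof -
    have "P / r \<le> P / ((x - v0) / s)"
      using rl P x sp rp by (intro divide_left_mono mult_pos_pos) auto
    also have "\<dots> = s powr p / (x - v0)"
      unfolding P_def using sp x by (simp add: field_simps powr_diff)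
    also have "\<dots> \<le> f x / C"
      using spow C_pos x by (simp add: field_simps)
    finally show ?thesis .
  qed
  have b': "(real n - 1) / r * P \<le> (real n - 1) * (f x / C)"
  proof -
    have "(real n - 1) / r * P = (real n - 1) * (P / r)" by simp
    also have "\<dots> \<le> (real n - 1) * (f x / C)" using b n by (intro mult_left_mono) auto
    finally show ?thesis .
  qed
  have cg: "g s \<le> f x / K"
  proof -
    have "s * g s \<le> Gam s" using Gam_ge_sg sp by simp
    also have "\<dots> \<le> (x - v0) * f x" using GamS D_upper[of x] x by simp
    also have "\<dots> \<le> (s / K) * f x"
      using psi_K[of x] x K_pos fx unfolding s_def by (intro mult_right_mono) (auto simp: field_simps)
    finally have "s * g s \<le> s * (f x / K)" by simp
    then show ?thesis using sp by (metis mult_le_cancel_left_pos)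
  qed
  have "w' + (real n - 1) / r * P + g s \<le> f x / c + (real n - 1) * (f x / C) + f x / K"
    using a b' cg by simp
  also have "\<dots> = (kap + 1 / K) * f x" unfolding kap_def c_def by (simp add: field_simps)
  also have "\<dots> < f x" using sum_lt1 fx by simp
  finally have "w' + (real n - 1) / r * P < f x - g s" by simp
  then show ?thesis using dw unfolding P_def s_def x_def dv_def by blast
qed

lemma main: "mono_on {0..<R} vv \<and> strict_radial_supersol p n f g v0 R vv \<and> filterlim vv at_top (at_left R)"
proof (intro conjI vv_mono vv_lim)
  show "strict_radial_supersol p n f g v0 R vv"
    unfolding strict_radial_supersol_def
  proof (intro exI[of _ dv] conjI ballI)
    fix r assume r: "r \<in> {0..<R}"
    show "(vv has_real_derivative dv r) (at r within {0..<R})"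
    proof (cases "r = 0")
      case True then show ?thesis using vv_deriv0 by simp
    next
      case False
      then have "r \<in> {0<..<R}" using r by auto
      then show ?thesis using vv_deriv unfolding dv_def by (blast intro: has_field_derivative_at_within)
    qed
    show "dv r \<ge> 0" using dv_nonneg r .
  next
    show "continuous_on {0..<R} dv" by (rule dv_cont)
    show "vv 0 = v0" by (rule vv0)
    show "dv 0 = 0" by (rule dv0)
  next
    fix r assume "r \<in> {0<..<R}"
    then show "\<exists>w'. ((\<lambda>s. dv s powr (p - 1)) has_real_derivative w') (at r)
               \<and> w' + (real n - 1) / r * dv r powr (p - 1) < f (vv r) - g (dv r)"
      by (rule ode)
  qed
qed

lemma main_ex: "\<exists>R>0. \<exists>v. mono_on {0..<R} v \<and> strict_radial_supersol p n f g v0 R v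
           \<and> filterlim v at_top (at_left R)"
  using main R_pos by blast

end

context KO2 begin
lemma final: "\<exists>V>0. \<forall>v0\<ge>V. \<exists>R>0. \<exists>v.
           mono_on {0..<R} v \<and> strict_radial_supersol p n f g v0 R v
           \<and> filterlim v at_top (at_left R)"
proof -
  obtain V where V: "V \<ge> 1" "\<And>v0 t. v0 \<ge> V \<Longrightarrow> t \<ge> 0 \<Longrightarrow> Gam (K * t) \<le> FF (v0 + t) - FF v0"
    using P1_exists by blast
  have "\<exists>R>0. \<exists>v. mono_on {0..<R} v \<and> strict_radial_supersol p n f g v0 R v
           \<and> filterlim v at_top (at_left R)" if v0: "v0 \<ge> V" for v0
  proof -
    interpret K3: KO3 p n f g v0
      by unfold_locales (use V v0 in auto)
    show ?thesis by (rule K3.main_ex)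
  qed
  then show ?thesis using V by (intro exI[of _ V]) auto
qed
end

theorem lemma5p1:
  fixes p :: real and n :: nat and f g :: "real \<Rightarrow> real"
  assumes "1 < p" and "n \<ge> 1"
    and "continuous_on {0..} f" and "strict_mono_on {0..} f" and "f 0 = 0"
    and "\<exists>L. L-lipschitz_on {0..} g" and "strict_mono_on {0..} g" and "g 0 = 0"
    and "(\<lambda>s. 1 / KO_Gamma_inv p n g (KO_F f s)) integrable_on {1..}"
  shows "\<exists>V>0. \<forall>v0\<ge>V. \<exists>R>0. \<exists>v.
           mono_on {0..<R} v \<and> strict_radial_supersol p n f g v0 R v
           \<and> filterlim v at_top (at_left R)"
proof -
  interpret KO2 p n f g
    by unfold_locales (use assms in auto)
  show ?thesis by (rule final)
qed


end
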